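(* Consider the CT–DT interconnected system described in the context, and let Assumptions (A1), (A2), (A3) hold with respect to the norms $\|\cdot\|_{\mathcal X}$ and $\|\cdot\|_{\mathcal Z}$. Suppose that $$-\mathsf{osLip}_x(f)\,\big(1-\mathsf{Lip}_z(\mathsf G)\big) > \mathsf{Lip}_z(f)\,\mathsf{Lip}_x(\mathsf G).$$ Then for every $n\in\mathbb Z_{>0}$ and every $T>0$ there exists a vector $\eta=(\eta_1,\eta_2)\in\mathbb R^2_{>0}$ such that, with the composite norm $\|(x,z)\|_{\mathsf{cmp}}:=\big\|(\|x\|_{\mathcal X},\|z\|_{\mathcal Z})\big\|_{2,[\eta]}$ on $\mathbb R^{n_x+n_z}$, where $\|(v_1,v_2)\|_{2,[\eta]}:=\sqrt{\eta_1v_1^2+\eta_2v_2^2}$: (i) the interconnected system is $T$-discrete-time contractive with respect to $\|\cdot\|_{\mathsf{cmp}}$, i.e., there is $b\in(0,1)$ with $\|y(kT)-\bar y(kT)\|_{\mathsf{cmp}}\le b^k\|y(0)-\bar y(0)\|_{\mathsf{cmp}}$ for all $k\in\mathbb Z_{\ge0}$ and all pairs of solutions $y,\bar y$; (ii) the origin is globally exponentially stable for the interconnected system, i.e., there exist $r\ge0$, $a>0$ with $\|y(t)\|_{\mathsf{cmp}}\le r e^{-at}\|y(0)\|_{\mathsf{cmp}}$ for all $t\ge0$ and all solutions $y$.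
   Context: Setup. Let $\|\cdot\|_{\mathcal X}$ be a norm on $\mathbb R^{n_x}$ and $\|\cdot\|_{\mathcal Z}$ a norm on $\mathbb R^{n_z}$; $\mathcal X\subseteq\mathbb R^{n_x}$, $\mathcal Z\subseteq\mathbb R^{n_z}$ are convex sets. Let $f:\mathcal X\times\mathcal Z\to\mathbb R^{n_x}$ and $\mathsf G:\mathcal X\times\mathcal Z\to\mathcal Z$ be continuous, and define $\mathsf G^1(x,z)=\mathsf G(x,z)$, $\mathsf G^{m+1}(x,z)=\mathsf G(x,\mathsf G^m(x,z))$. For $T>0$ and $n\in\mathbb Z_{>0}$ the interconnected (sampled-data) system is $\dot x(t)=f(x(t),z(t))$, $z_k=\mathsf G^n(x(kT),z_{k-1})$, $z(t)=z_k$ for $t\in[kT,(k+1)T)$, $k\in\mathbb Z_{\ge0}$, with state $y(t)=(x(t),z(t))$; $\mathcal X\times\mathcal Z$ is assumed forward invariant. It is assumed $f(0,0)=0$ and $\mathsf G(0,0)=0$. Lipschitz notions. $\mathsf{Lip}_z(f):=\sup_x\sup_{z_1\ne z_2}\|f(x,z_1)-f(x,z_2)\|_{\mathcal X}/\|z_1-z_2\|_{\mathcal Z}$; $\mathsf{Lip}_x(f)$, $\mathsf{Lip}_x(\mathsf G)$, $\mathsf{Lip}_z(\mathsf G)$ are defined analogously (sup over the other argument, with the appropriate norms). Let $\llbracket\cdot;\cdot\rrbracket$ be a weak pairing on $\mathbb R^{n_x}$ compatible with $\|\cdot\|_{\mathcal X}$ (in particular $\llbracket x;x\rrbracket=\|x\|_{\mathcal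 X}^2$, sub-additive in first argument, and $\llbracket x;y\rrbracket\le\|x\|_{\mathcal X}\|y\|_{\mathcal X}$; for the Euclidean norm it is the inner product). The one-sided Lipschitz constant is $\mathsf{osLip}_x(f):=\sup_z\sup_{x_1\ne x_2}\llbracket f(x_1,z)-f(x_2,z);x_1-x_2\rrbracket/\|x_1-x_2\|_{\mathcal X}^2$, and for a map $F:\mathcal X\to\mathbb R^{n_x}$, $\mathsf{osLip}(F):=\sup_{x_1\ne x_2}\llbracket F(x_1)-F(x_2);x_1-x_2\rrbracket/\|x_1-x_2\|_{\mathcal X}^2$. Assumptions. (A1) $x\mapsto f(x,z)$ is Lipschitz uniformly in $z\in\mathcal Z$ ($\mathsf{Lip}_x(f)<\infty$). (A2) $\mathsf{Lip}_z(f)\in(0,\infty)$ and $\mathsf{Lip}_x(\mathsf G)\in(0,\infty)$. (A3) $\mathsf{Lip}_z(\mathsf G)<1$. *)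

theory Defs
  imports "HOL-Analysis.Analysis"
begin

definition is_norm :: "('a::real_vector \<Rightarrow> real) \<Rightarrow> bool" where
  "is_norm N \<longleftrightarrow>
     (\<forall>x. 0 \<le> N x) \<and> (\<forall>x. N x = 0 \<longleftrightarrow> x = 0) \<and>
     (\<forall>c x. N (scaleR c x) = \<bar>c\<bar> * N x) \<and> (\<forall>x y. N (x + y) \<le> N x + N y)"

definition weak_pairing :: "('a::real_normed_vector \<Rightarrow> 'a \<Rightarrow> real) \<Rightarrow> bool" where
  "weak_pairing wp \<longleftrightarrow>
     (\<forall>x1 x2 y. wp (x1 + x2) y \<le> wp x1 y + wp x2 y) \<and>
     (\<forall>y. continuous_on UNIV (\<lambda>x. wp x y)) \<and>
     (\<forall>\<alpha> x y. \<alpha> \<ge> 0 \<longrightarrow> wp (\<alpha> *\<^sub>R x) y = \<alpha> * wp x y \<and> wp x (\<alpha> *\<^sub>R y) = \<alpha> * wp x y) \<and>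
     (\<forall>x y. wp (- x) (- y) = wp x y) \<and>
     (\<forall>x. x \<noteq> 0 \<longrightarrow> wp x x > 0) \<and>
     (\<forall>x y. \<bar>wp x y\<bar> \<le> sqrt (wp x x) * sqrt (wp y y))"

definition compatible_weak_pairing ::
  "('a::real_normed_vector \<Rightarrow> 'a \<Rightarrow> real) \<Rightarrow> ('a \<Rightarrow> real) \<Rightarrow> bool" where
  "compatible_weak_pairing wp N \<longleftrightarrow> weak_pairing wp \<and> (\<forall>x. wp x x = (N x)\<^sup>2)"

definition Lip_x_f ::
  "('x \<Rightarrow> real) \<Rightarrow> 'x set \<Rightarrow> 'z set \<Rightarrow> ('x::real_vector \<times> 'z \<Rightarrow> 'x) \<Rightarrow> ereal" where
  "Lip_x_f nX X Z f = (SUP p \<in> {(z, x1, x2). z \<in> Z \<and> x1 \<in> X \<and> x2 \<in> X \<and> x1 \<noteq> x2}.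
      (case p of (z, x1, x2) \<Rightarrow> ereal (nX (f (x1, z) - f (x2, z)) / nX (x1 - x2))))"

definition Lip_z_f ::
  "('x \<Rightarrow> real) \<Rightarrow> ('z \<Rightarrow> real) \<Rightarrow> 'x set \<Rightarrow> 'z set \<Rightarrow> ('x::real_vector \<times> 'z::real_vector \<Rightarrow> 'x) \<Rightarrow> ereal" where
  "Lip_z_f nX nZ X Z f = (SUP p \<in> {(x, z1, z2). x \<in> X \<and> z1 \<in> Z \<and> z2 \<in> Z \<and> z1 \<noteq> z2}.
      (case p of (x, z1, z2) \<Rightarrow> ereal (nX (f (x, z1) - f (x, z2)) / nZ (z1 - z2))))"

definition Lip_x_G ::
  "('x \<Rightarrow> real) \<Rightarrow> ('z \<Rightarrow> real) \<Rightarrow> 'x set \<Rightarrow> 'z set \<Rightarrow> ('x::real_vector \<times> 'z::real_vector \<Rightarrow> 'z) \<Rightarrow> ereal" where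
  "Lip_x_G nX nZ X Z G = (SUP p \<in> {(z, x1, x2). z \<in> Z \<and> x1 \<in> X \<and> x2 \<in> X \<and> x1 \<noteq> x2}.
      (case p of (z, x1, x2) \<Rightarrow> ereal (nZ (G (x1, z) - G (x2, z)) / nX (x1 - x2))))"

definition Lip_z_G ::
  "('z \<Rightarrow> real) \<Rightarrow> 'x set \<Rightarrow> 'z set \<Rightarrow> ('x \<times> 'z::real_vector \<Rightarrow> 'z) \<Rightarrow> ereal" where
  "Lip_z_G nZ X Z G = (SUP p \<in> {(x, z1, z2). x \<in> X \<and> z1 \<in> Z \<and> z2 \<in> Z \<and> z1 \<noteq> z2}.
      (case p of (x, z1, z2) \<Rightarrow> ereal (nZ (G (x, z1) - G (x, z2)) / nZ (z1 - z2))))"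

definition osLip_x_f ::
  "('x \<Rightarrow> 'x \<Rightarrow> real) \<Rightarrow> ('x \<Rightarrow> real) \<Rightarrow> 'x set \<Rightarrow> 'z set \<Rightarrow> ('x::real_vector \<times> 'z \<Rightarrow> 'x) \<Rightarrow> ereal" where
  "osLip_x_f wp nX X Z f = (SUP p \<in> {(z, x1, x2). z \<in> Z \<and> x1 \<in> X \<and> x2 \<in> X \<and> x1 \<noteq> x2}.
      (case p of (z, x1, x2) \<Rightarrow> ereal (wp (f (x1, z) - f (x2, z)) (x1 - x2) / (nX (x1 - x2))\<^sup>2)))"

fun Giter :: "('x \<times> 'z \<Rightarrow> 'z) \<Rightarrow> nat \<Rightarrow> 'x \<Rightarrow> 'z \<Rightarrow> 'z" where
  "Giter G 0 x z = z"
| "Giter G (Suc m) x z = G (x, Giter G m x z)"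

text \<open>Index shift: zs 0 = z_{-1}, zs (Suc k) = z_k.  The held signal z(t) = z_k on [kT,(k+1)T).\<close>
definition held :: "real \<Rightarrow> (nat \<Rightarrow> 'z) \<Rightarrow> real \<Rightarrow> 'z" where
  "held T zs t = zs (Suc (nat \<lfloor>t / T\<rfloor>))"

definition is_solution ::
  "('x::real_normed_vector \<times> 'z \<Rightarrow> 'x) \<Rightarrow> ('x \<times> 'z \<Rightarrow> 'z) \<Rightarrow> 'x set \<Rightarrow> 'z set \<Rightarrow> real \<Rightarrow> nat \<Rightarrow>
   (real \<Rightarrow> 'x) \<Rightarrow> (nat \<Rightarrow> 'z) \<Rightarrow> bool" where
  "is_solution f G X Z T n x zs \<longleftrightarrow>
     (\<forall>t\<ge>0. x t \<in> X) \<and> (\<forall>k. zs k \<in> Z) \<and>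
     (\<forall>k. zs (Suc k) = Giter G n (x (real k * T)) (zs k)) \<and>
     continuous_on {0..} x \<and>
     (\<forall>k. \<forall>t \<in> {real k * T .. real (Suc k) * T}.
        (x has_vector_derivative f (x t, zs (Suc k))) (at t within {real k * T .. real (Suc k) * T}))"

definition cmp_norm :: "('x \<Rightarrow> real) \<Rightarrow> ('z \<Rightarrow> real) \<Rightarrow> real \<Rightarrow> real \<Rightarrow> 'x \<Rightarrow> 'z \<Rightarrow> real" where
  "cmp_norm nX nZ \<eta>1 \<eta>2 x z = sqrt (\<eta>1 * (nX x)\<^sup>2 + \<eta>2 * (nZ z)\<^sup>2)"

end

theory Submission
  imports Defs
begin

lemma first_cross:
  fixes g :: "real \<Rightarrow> real"
  assumes cont: "continuous_on {a..b} g" and ga: "g a < 0"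
    and H: "\<And>t. t \<in> {a<..b} \<Longrightarrow> g t = 0 \<Longrightarrow> \<exists>s\<in>{a..<t}. g s > 0"
    and t: "t \<in> {a..b}"
  shows "g t < 0"
proof (rule ccontr)
  assume "\<not> g t < 0"
  hence gt: "g a \<le> 0" "0 \<le> g t" using ga by auto
  have at: "a \<le> t" "t \<le> b" using t by auto
  have cont1: "continuous_on {a..t} g" by (rule continuous_on_subset[OF cont]) (use at in auto)
  define S where "S = {x \<in> {a..t}. g x = 0}"
  from IVT'[OF gt(1) gt(2) at(1) cont1] obtain x0 where "x0 \<ge> a" "x0 \<le> t" "g x0 = 0" by auto
  hence Sne: "S \<noteq> {}" unfolding S_def by auto
  have clS: "closed S" unfolding S_def by (rule continuous_closed_preimage_constant[OF cont1]) simp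
  have bdd: "bdd_below S" unfolding S_def by (rule bdd_belowI[of _ a]) auto
  define t0 where "t0 = Inf S"
  have t0S: "t0 \<in> S" unfolding t0_def using closed_contains_Inf[OF Sne bdd clS] .
  hence t0: "a \<le> t0" "t0 \<le> t" "g t0 = 0" unfolding S_def by auto
  have "t0 \<noteq> a" using t0 ga by auto
  hence "t0 \<in> {a<..b}" using t0 at by auto
  from H[OF this t0(3)] obtain s where s: "s \<in> {a..<t0}" "g s > 0" by auto
  have cont2: "continuous_on {a..s} g" using cont s t0 at by (intro continuous_on_subset[OF cont]) auto
  from IVT'[of g a 0 s, OF _ _ _ cont2] s ga obtain x1 where x1: "x1 \<ge> a" "x1 \<le> s" "g x1 = 0" by auto
  have "x1 \<in> S" unfolding S_def using x1 s t0 by auto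
  hence "t0 \<le> x1" unfolding t0_def by (rule cInf_lower[OF _ bdd])
  thus False using x1 s by auto
qed

lemma deriv_approx:
  assumes "(F has_vector_derivative F') (at t within S)" "e > 0"
  shows "\<exists>d>0. \<forall>s\<in>S. \<bar>s - t\<bar> < d \<longrightarrow> norm (F s - F t - (s - t) *\<^sub>R F') \<le> e * \<bar>s - t\<bar>"
  using assms unfolding has_vector_derivative_def has_derivative_within_alt by auto

lemma normD:
  assumes "is_norm N"
  shows "N x \<ge> 0" "N 0 = 0" "N (- x) = N x" "N (x + y) \<le> N x + N y"
    "N (scaleR c x) = \<bar>c\<bar> * N x" "N (x - y) = N (y - x)"
proof -
  show "N (scaleR c x) = \<bar>c\<bar> * N x" "N x \<ge> 0" "N 0 = 0" "N (x + y) \<le> N x + N y"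
    using assms unfolding is_norm_def by auto
  have "N (scaleR (-1) x) = \<bar>-1\<bar> * N x" using assms unfolding is_norm_def by blast
  thus "N (- x) = N x" by simp
  have "N (scaleR (-1) (x - y)) = \<bar>-1\<bar> * N (x - y)" using assms unfolding is_norm_def by blast
  thus "N (x - y) = N (y - x)" by simp
qed

lemma norm_sum_le:
  assumes "is_norm N" "finite A"
  shows "N (sum f A) \<le> (\<Sum>i\<in>A. N (f i))"
  using assms(2)
proof (induction A rule: finite_induct)
  case empty then show ?case using normD[OF assms(1)] by simp
next
  case (insert i A)
  then show ?case using normD(4)[OF assms(1), of "f i" "sum f A"] by simp
qed

lemma norm_cart_bound:
  fixes N :: "real^'n \<Rightarrow> real"
  assumes "is_norm N"
  shows "\<exists>C\<ge>0. \<forall>x. N x \<le> C * norm x"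
proof -
  define C where "C = (\<Sum>i\<in>UNIV. N (axis i (1::real)))"
  have C0: "C \<ge> 0" unfolding C_def by (intro sum_nonneg) (simp add: normD[OF assms])
  have "N x \<le> C * norm x" for x
  proof -
    have "N x = N (\<Sum>i\<in>UNIV. x $ i *\<^sub>R axis i 1)"
      using basis_expansion[of x] by (simp add: scalar_mult_eq_scaleR)
    also have "\<dots> \<le> (\<Sum>i\<in>UNIV. N (x $ i *\<^sub>R axis i 1))" by (rule norm_sum_le[OF assms]) simp
    also have "\<dots> = (\<Sum>i\<in>UNIV. \<bar>x $ i\<bar> * N (axis i 1))" by (simp add: normD(5)[OF assms])
    also have "\<dots> \<le> (\<Sum>i\<in>UNIV. norm x * N (axis i 1))"
      by (intro sum_mono mult_right_mono component_le_norm_cart) (simp add: normD[OF assms])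
    also have "\<dots> = C * norm x" unfolding C_def by (simp add: sum_distrib_left mult.commute)
    finally show ?thesis .
  qed
  thus ?thesis using C0 by blast
qed

lemma norm_cart_cont:
  fixes N :: "real^'n \<Rightarrow> real"
  assumes "is_norm N"
  shows "continuous_on S N"
proof -
  obtain C where C: "C \<ge> 0" "\<And>x. N x \<le> C * norm x" using norm_cart_bound[OF assms] by blast
  have "C-lipschitz_on S N"
  proof (rule lipschitz_onI)
    fix x y assume "x \<in> S" "y \<in> S"
    have "N x \<le> N y + N (x - y)" using normD(4)[OF assms, of y "x - y"] by simp
    moreover have "N y \<le> N x + N (x - y)" using normD(4)[OF assms, of x "y - x"] normD(6)[OF assms, of x y] by simp
    ultimately have "\<bar>N x - N y\<bar> \<le> N (x - y)" by linarith
    also have "\<dots> \<le> C * dist x y" using C(2) by (simp add: dist_norm)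
    finally show "dist (N x) (N y) \<le> C * dist x y" by (simp add: dist_real_def)
  qed (use C in auto)
  thus ?thesis by (rule lipschitz_on_continuous_on)
qed

lemma wp_le:
  assumes "compatible_weak_pairing wp N" "is_norm N"
  shows "wp x y \<le> N x * N y"
proof -
  have "wp x y \<le> \<bar>wp x y\<bar>" by simp
  also have "\<dots> \<le> sqrt (wp x x) * sqrt (wp y y)" using assms(1)
    unfolding compatible_weak_pairing_def weak_pairing_def by blast
  also have "\<dots> = N x * N y" using assms(1) normD(1)[OF assms(2)]
    unfolding compatible_weak_pairing_def by simp
  finally show ?thesis .
qed

lemma wp_add:
  assumes "compatible_weak_pairing wp N"
  shows "wp (x1 + x2) y \<le> wp x1 y + wp x2 y" "wp x x = (N x)\<^sup>2"
    "a \<ge> 0 \<Longrightarrow> wp (a *\<^sub>R x) y = a * wp x y"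
  using assms unfolding compatible_weak_pairing_def weak_pairing_def by auto

lemma ode_bound:
  fixes w v :: "real \<Rightarrow> real^'n" and N :: "real^'n \<Rightarrow> real"
  assumes normN: "is_norm N" and wpc: "compatible_weak_pairing wp N"
    and c: "c < 0" and D: "D \<ge> 0"
    and der: "\<And>t. t \<in> {a..b} \<Longrightarrow> (w has_vector_derivative v t) (at t within {a..b})"
    and osl: "\<And>t. t \<in> {a..b} \<Longrightarrow> wp (v t) (w t) \<le> c * (N (w t))\<^sup>2 + D * N (w t)"
    and t: "t \<in> {a..b}"
  shows "N (w t) \<le> exp (c*(t-a)) * N (w a) + D / (-c) * (1 - exp (c*(t-a)))"
proof -
  obtain C where C: "C \<ge> 0" "\<And>x. N x \<le> C * norm x" using norm_cart_bound[OF normN] by blast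
  have contw: "continuous_on {a..b} w"
    unfolding continuous_on_eq_continuous_within using der has_vector_derivative_continuous by blast
  define phi where "phi s = N (w s)" for s
  have contphi: "continuous_on {a..b} phi" unfolding phi_def
    by (rule continuous_on_compose2[OF norm_cart_cont[OF normN] contw]) auto
  have phi0: "phi s \<ge> 0" for s unfolding phi_def by (simp add: normD[OF normN])
  define P0 where "P0 s = exp (c*(s-a)) * phi a + D / (-c) * (1 - exp (c*(s-a)))" for s
  define K where "K s = exp (c*(s-a)) + (1 - exp (c*(s-a))) / (-c)" for s
  have ta: "a \<le> t" "t \<le> b" using t by auto
  have Kpos: "K t > 0"
  proof -
    have "exp (c*(t-a)) \<le> 1" using c ta by (simp add: mult_nonpos_nonneg)
    hence "(1 - exp (c*(t-a))) / (-c) \<ge> 0" using c by (intro divide_nonneg_pos) auto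
    moreover have "exp (c*(t-a)) > 0" by simp
    ultimately show ?thesis unfolding K_def by linarith
  qed
  have key: "phi t < P0 t + e * K t" if e: "e > 0" for e
  proof -
    define psi where "psi s = exp (c*(s-a)) * (phi a + e) + (D+e) / (-c) * (1 - exp (c*(s-a)))" for s
    have psiP: "psi s = P0 s + e * K s" for s
      unfolding psi_def P0_def K_def using c by (simp add: divide_simps) (simp add: algebra_simps)
    define g where "g s = phi s - psi s" for s
    have contg: "continuous_on {a..b} g" unfolding g_def psi_def
      by (intro continuous_intros contphi)
    have ga: "g a < 0" unfolding g_def psi_def using e by simp
    have H: "\<exists>s\<in>{a..<t'}. g s > 0" if t': "t' \<in> {a<..b}" "g t' = 0" for t'
    proof -
      have t'ab: "t' \<in> {a..b}" using t' by auto
      define psi' where "psi' = exp (c*(t'-a)) * c * (phi a + e) + (D+e) * exp (c*(t'-a))"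
      have dpsi: "(psi has_real_derivative psi') (at t')"
        unfolding psi_def psi'_def using c
        by (auto intro!: derivative_eq_intros simp: field_simps)
      hence dpsi': "(psi has_vector_derivative psi') (at t' within {a..b})"
        by (simp add: has_real_derivative_iff_has_vector_derivative has_vector_derivative_at_within)
      have psipos: "psi t' > 0"
      proof -
        have "exp (c*(t'-a)) \<le> 1" using c t' by (simp add: mult_nonpos_nonneg)
        hence "(D+e) / (-c) * (1 - exp (c*(t'-a))) \<ge> 0" using c D e by (intro mult_nonneg_nonneg divide_nonneg_pos) auto
        moreover have "exp (c*(t'-a)) * (phi a + e) > 0" using phi0[of a] e by simp
        ultimately show ?thesis unfolding psi_def by linarith
      qed
      have phit: "phi t' = psi t'" using t' unfolding g_def by simp
      have psi'eq: "psi' = c * psi t' + D + e" unfolding psi'_def psi_def using c by (simp add: field_simps)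
      define e1 where "e1 = e / (4 * (C + 1))"
      have e1: "e1 > 0" "C * e1 \<le> e / 4" unfolding e1_def using e C by (auto simp: field_simps)
      obtain d1 where d1: "d1 > 0" "\<And>s. s \<in> {a..b} \<Longrightarrow> \<bar>s - t'\<bar> < d1 \<Longrightarrow>
          norm (w s - w t' - (s - t') *\<^sub>R v t') \<le> e1 * \<bar>s - t'\<bar>"
        using deriv_approx[OF der[OF t'ab] e1(1)] by blast
      obtain d2 where d2: "d2 > 0" "\<And>s. s \<in> {a..b} \<Longrightarrow> \<bar>s - t'\<bar> < d2 \<Longrightarrow>
          norm (psi s - psi t' - (s - t') *\<^sub>R psi') \<le> (e/4) * \<bar>s - t'\<bar>"
        using deriv_approx[OF dpsi', of "e/4"] e by auto
      define h where "h = min (t' - a) (min d1 d2 / 2)"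
      have h: "h > 0" "h \<le> t' - a" "h < d1" "h < d2" unfolding h_def using t' d1 d2 by auto
      define s where "s = t' - h"
      have s: "s \<in> {a..<t'}" "s \<in> {a..b}" "\<bar>s - t'\<bar> = h" using h t' unfolding s_def by auto
      define r where "r = w t' - w s - h *\<^sub>R v t'"
      have "w s - w t' - (s - t') *\<^sub>R v t' = - r"
        unfolding r_def s_def by (simp add: algebra_simps)
      hence "norm r = norm (w s - w t' - (s - t') *\<^sub>R v t')" by simp
      also have "\<dots> \<le> e1 * h" using d1(2)[OF s(2)] s(3) h by auto
      finally have "norm r \<le> e1 * h" .
      hence "C * norm r \<le> C * (e1 * h)" using C(1) by (rule mult_left_mono)
      hence nr: "N r \<le> C * e1 * h" using C(2)[of r] by (simp add: mult.assoc)
      have wt: "w t' = w s + (h *\<^sub>R v t' + r)" unfolding r_def by simp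
      have "(phi t')\<^sup>2 = wp (w t') (w t')" unfolding phi_def using wp_add[OF wpc] by simp
      also have "\<dots> \<le> wp (w s) (w t') + wp (h *\<^sub>R v t' + r) (w t')"
        using wp_add(1)[OF wpc, of "w s" "h *\<^sub>R v t' + r" "w t'"] wt by simp
      also have "\<dots> \<le> wp (w s) (w t') + (wp (h *\<^sub>R v t') (w t') + wp r (w t'))"
        using wp_add(1)[OF wpc, of "h *\<^sub>R v t'" r "w t'"] by simp
      also have "\<dots> = wp (w s) (w t') + (h * wp (v t') (w t') + wp r (w t'))"
        using wp_add(3)[OF wpc, of h] h by simp
      also have "\<dots> \<le> phi s * phi t' + (h * (c * (phi t')\<^sup>2 + D * phi t') + N r * phi t')"
        using wp_le[OF wpc normN, of "w s" "w t'"] wp_le[OF wpc normN, of r "w t'"]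
          mult_left_mono[OF osl[OF t'ab], of h] h unfolding phi_def by linarith
      finally have "phi t' * phi t' \<le> phi t' * (phi s + h * (c * phi t' + D) + N r)"
        by (simp add: power2_eq_square algebra_simps)
      hence A: "phi t' \<le> phi s + h * (c * phi t' + D) + N r"
        using psipos phit by simp
      have "\<bar>psi s - psi t' - (s - t') * psi'\<bar> \<le> (e/4) * h" using d2(2)[OF s(2)] s(3) h by auto
      moreover have "s - t' = - h" unfolding s_def by simp
      ultimately have "\<bar>psi s - psi t' + h * psi'\<bar> \<le> (e/4) * h" by simp
      hence B: "psi s \<le> psi t' - h * psi' + (e/4) * h" by linarith
      have "g s = phi s - psi s" unfolding g_def ..
      have "phi s - psi s \<ge> h * e - C * e1 * h - (e/4) * h"
        using A B nr phit psi'eq by (simp add: algebra_simps)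
      moreover have "C * e1 * h \<le> (e/4) * h" using e1 h by (simp add: mult_right_mono)
      ultimately have "g s \<ge> h * e / 2" unfolding g_def by (simp add: algebra_simps)
      moreover have "h * e / 2 > 0" using h e by simp
      ultimately show ?thesis using s by force
    qed
    have "g t < 0" by (rule first_cross[OF contg ga H t]) auto
    thus ?thesis unfolding g_def psiP by simp
  qed
  have "phi t \<le> P0 t"
  proof (rule field_le_epsilon)
    fix e :: real assume e: "e > 0"
    have "phi t < P0 t + (e / K t) * K t" using key[of "e / K t"] e Kpos by simp
    thus "phi t \<le> P0 t + e" using Kpos by simp
  qed
  thus ?thesis unfolding phi_def P0_def by simp
qed

lemma cs2:
  fixes m1 m2 s A B :: real
  assumes "m1 \<ge> 0" "m2 \<ge> 0" "s > 0"
  shows "(m1 * A + m2 * B)\<^sup>2 \<le> (m1 + m2 * s) * (m1 * A\<^sup>2 + m2 * B\<^sup>2 / s)"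
proof -
  have "(m1 + m2 * s) * (m1 * A\<^sup>2 + m2 * B\<^sup>2 / s) - (m1 * A + m2 * B)\<^sup>2
        = m1 * m2 * (s * A - B)\<^sup>2 / s"
    using assms by (simp add: field_simps power2_eq_square)
  also have "\<dots> \<ge> 0" using assms by simp
  finally show ?thesis by simp
qed

lemma contr_gen:
  fixes ma mb mc md s u l A B A' B' :: real
  assumes m: "ma \<ge> 0" "mb \<ge> 0" "mc \<ge> 0" "md \<ge> 0" and su: "s > 0" "u > 0" "l \<ge> 0"
    and l1: "ma + mb * s \<le> l" and l2: "mc + md * s \<le> l * s"
    and l3: "ma + mc * u \<le> l" and l4: "mb + md * u \<le> l * u"
    and AB: "0 \<le> A" "0 \<le> B" "0 \<le> A'" "0 \<le> B'"
    and A': "A' \<le> ma * A + mb * B" and B': "B' \<le> mc * A + md * B"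
  shows "A'\<^sup>2 + (u / s) * B'\<^sup>2 \<le> l\<^sup>2 * (A\<^sup>2 + (u / s) * B\<^sup>2)"
proof -
  have P1: "ma * A\<^sup>2 + mb * B\<^sup>2 / s \<ge> 0" "mc * A\<^sup>2 + md * B\<^sup>2 / s \<ge> 0" using m su by auto
  have "A'\<^sup>2 \<le> (ma * A + mb * B)\<^sup>2" using A' AB by (intro power_mono) auto
  also have "\<dots> \<le> (ma + mb * s) * (ma * A\<^sup>2 + mb * B\<^sup>2 / s)" by (rule cs2) (use m su in auto)
  also have "\<dots> \<le> l * (ma * A\<^sup>2 + mb * B\<^sup>2 / s)" by (rule mult_right_mono[OF l1 P1(1)])
  finally have X: "A'\<^sup>2 \<le> l * (ma * A\<^sup>2 + mb * B\<^sup>2 / s)" .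
  have "B'\<^sup>2 \<le> (mc * A + md * B)\<^sup>2" using B' AB by (intro power_mono) auto
  also have "\<dots> \<le> (mc + md * s) * (mc * A\<^sup>2 + md * B\<^sup>2 / s)" by (rule cs2) (use m su in auto)
  also have "\<dots> \<le> (l * s) * (mc * A\<^sup>2 + md * B\<^sup>2 / s)" by (rule mult_right_mono[OF l2 P1(2)])
  finally have Y: "B'\<^sup>2 \<le> (l * s) * (mc * A\<^sup>2 + md * B\<^sup>2 / s)" .
  have "(u / s) * B'\<^sup>2 \<le> (u / s) * ((l * s) * (mc * A\<^sup>2 + md * B\<^sup>2 / s))"
    using Y su by (intro mult_left_mono) auto
  also have "\<dots> = l * u * (mc * A\<^sup>2 + md * B\<^sup>2 / s)" using su by simp
  finally have Y': "(u / s) * B'\<^sup>2 \<le> l * u * (mc * A\<^sup>2 + md * B\<^sup>2 / s)" .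
  have EQ: "l * ((ma + mc * u) * A\<^sup>2 + (mb + md * u) * (B\<^sup>2 / s))
      = l * (ma * A\<^sup>2 + mb * B\<^sup>2 / s) + l * u * (mc * A\<^sup>2 + md * B\<^sup>2 / s)"
    using su by (simp add: field_simps)
  have "A'\<^sup>2 + (u / s) * B'\<^sup>2 \<le> l * ((ma + mc * u) * A\<^sup>2 + (mb + md * u) * (B\<^sup>2 / s))"
    unfolding EQ using X Y' by linarith
  also have "\<dots> \<le> l * (l * A\<^sup>2 + (l * u) * (B\<^sup>2 / s))"
    using l3 l4 su by (intro mult_left_mono add_mono mult_right_mono) auto
  also have "\<dots> = l\<^sup>2 * (A\<^sup>2 + (u / s) * B\<^sup>2)" by (simp add: power2_eq_square algebra_simps)
  finally show ?thesis .
qed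

lemma contr_exists:
  fixes e k al be :: real
  assumes e: "0 < e" "e < 1" and k: "k > 0" and al: "al > 0" and be: "be \<ge> 0"
    and cond: "al * k < 1 - be"
  shows "\<exists>eta2 l. eta2 > 0 \<and> 0 < l \<and> l < 1 \<and>
     (\<forall>A B A' B'. 0 \<le> A \<longrightarrow> 0 \<le> B \<longrightarrow> 0 \<le> A' \<longrightarrow> 0 \<le> B' \<longrightarrow>
        A' \<le> e * A + (k * (1 - e)) * B \<longrightarrow> B' \<le> (al * e) * A + (al * k * (1 - e) + be) * B \<longrightarrow>
        A'\<^sup>2 + eta2 * B'\<^sup>2 \<le> l\<^sup>2 * (A\<^sup>2 + eta2 * B\<^sup>2))"
proof -
  define m22 where "m22 = al * k * (1 - e) + be"
  define q where "q = 1 - m22"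
  have akq: "al * k * e < q" unfolding q_def m22_def using cond by (simp add: algebra_simps)
  have akepos: "al * k * e > 0" using al k e by simp
  have qpos: "q > 0" using akq akepos by linarith
  have m22: "m22 \<ge> 0" unfolding m22_def using al k e be by simp
  define s where "s = (al * e / q + 1 / k) / 2"
  define u where "u = (k * (1 - e) / q + (1 - e) / (al * e)) / 2"
  have i1: "al * e / q < 1 / k" using akq qpos k by (simp add: field_simps)
  have i2: "k * (1 - e) / q < (1 - e) / (al * e)"
  proof -
    have "(1 - e) * (al * k * e) < (1 - e) * q" using akq e by (intro mult_strict_left_mono) auto
    hence "k * (1 - e) * (al * e) < (1 - e) * q" by (simp add: algebra_simps)
    thus ?thesis using qpos al e by (simp add: divide_simps)
  qed
  have mid: "\<And>P Q::real. P < Q \<Longrightarrow> P < (P+Q)/2 \<and> (P+Q)/2 < Q" by (simp add: field_simps)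
  have sgt1: "al * e / q < s" "s < 1 / k" using mid[OF i1] unfolding s_def by auto
  have ugt1: "k * (1 - e) / q < u" "u < (1 - e) / (al * e)" using mid[OF i2] unfolding u_def by auto
  note sgt2 = sgt1(2) and ugt2 = ugt1(2)
  note sgt = sgt1 and ugt = ugt1
  have spos: "s > 0" using sgt(1) al e qpos by (smt (verit) divide_pos_pos mult_pos_pos)
  have upos: "u > 0" using ugt(1) k e qpos by (smt (verit) divide_pos_pos mult_pos_pos)
  have a: "e + k * (1 - e) * s < 1"
  proof -
    have "k * s < 1" using sgt(2) k by (simp add: field_simps)
    hence "(1 - e) * (k * s) < (1 - e) * 1" using e by (intro mult_strict_left_mono) auto
    thus ?thesis by (simp add: algebra_simps)
  qed
  have b: "(al * e + m22 * s) / s < 1"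
  proof -
    have "al * e < q * s" using sgt(1) qpos by (simp add: field_simps)
    hence "al * e + m22 * s < s" unfolding q_def by (simp add: algebra_simps)
    thus ?thesis using spos by simp
  qed
  have c: "e + al * e * u < 1"
  proof -
    have "al * e * u < 1 - e" using ugt(2) al e by (simp add: field_simps)
    thus ?thesis by simp
  qed
  have d: "(k * (1 - e) + m22 * u) / u < 1"
  proof -
    have "k * (1 - e) < q * u" using ugt(1) qpos by (simp add: field_simps)
    hence "k * (1 - e) + m22 * u < u" unfolding q_def by (simp add: algebra_simps)
    thus ?thesis using upos by simp
  qed
  define l where "l = max (max (e + k * (1 - e) * s) ((al * e + m22 * s) / s))
                         (max (e + al * e * u) ((k * (1 - e) + m22 * u) / u))"
  have l1: "l < 1" unfolding l_def using a b c d by auto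
  have "e + k * (1 - e) * s > 0" using e k spos by (simp add: add_pos_nonneg)
  hence l0: "l > 0" unfolding l_def by linarith
  have L1: "e + k * (1 - e) * s \<le> l" unfolding l_def by simp
  have L2: "al * e + m22 * s \<le> l * s"
  proof -
    have "(al * e + m22 * s) / s \<le> l" unfolding l_def by simp
    thus ?thesis using spos by (simp add: field_simps)
  qed
  have L3: "e + al * e * u \<le> l" unfolding l_def by simp
  have L4: "k * (1 - e) + m22 * u \<le> l * u"
  proof -
    have "(k * (1 - e) + m22 * u) / u \<le> l" unfolding l_def by simp
    thus ?thesis using upos by (simp add: field_simps)
  qed
  show ?thesis
  proof (intro exI conjI allI impI)
    show "u / s > 0" using upos spos by simp
    show "0 < l" "l < 1" using l0 l1 by auto
    fix A B A' B' :: real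
    assume H: "0 \<le> A" "0 \<le> B" "0 \<le> A'" "0 \<le> B'"
      "A' \<le> e * A + (k * (1 - e)) * B" "B' \<le> (al * e) * A + (al * k * (1 - e) + be) * B"
    show "A'\<^sup>2 + (u / s) * B'\<^sup>2 \<le> l\<^sup>2 * (A\<^sup>2 + (u / s) * B\<^sup>2)"
      by (rule contr_gen[where ma = e and mb = "k * (1 - e)" and mc = "al * e" and md = m22])
        (use e k al m22 spos upos l0 L1 L2 L3 L4 H in \<open>auto simp: m22_def mult.assoc\<close>)
  qed
qed

lemma giter_bound:
  assumes GZ: "G ` (X \<times> Z) \<subseteq> Z"
    and F2: "\<And>z x1 x2. z \<in> Z \<Longrightarrow> x1 \<in> X \<Longrightarrow> x2 \<in> X \<Longrightarrow> nZ (G (x1, z) - G (x2, z)) \<le> LG * nX (x1 - x2)"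
    and F3: "\<And>x z1 z2. x \<in> X \<Longrightarrow> z1 \<in> Z \<Longrightarrow> z2 \<in> Z \<Longrightarrow> nZ (G (x, z1) - G (x, z2)) \<le> l * nZ (z1 - z2)"
    and normZ: "is_norm nZ" and l: "l \<ge> 0" and LG: "LG \<ge> 0"
    and x: "x \<in> X" "xb \<in> X" and z: "z \<in> Z" "zb \<in> Z"
  shows "Giter G m x z \<in> Z \<and> Giter G m xb zb \<in> Z \<and>
    nZ (Giter G m x z - Giter G m xb zb) \<le> LG * (\<Sum>i<m. l ^ i) * nX (x - xb) + l ^ m * nZ (z - zb)"
proof (induction m)
  case 0
  then show ?case using z by simp
next
  case (Suc m)
  define g where "g = Giter G m x z"
  define gb where "gb = Giter G m xb zb"
  have gZ: "g \<in> Z" "gb \<in> Z" using Suc unfolding g_def gb_def by auto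
  have IH: "nZ (g - gb) \<le> LG * (\<Sum>i<m. l ^ i) * nX (x - xb) + l ^ m * nZ (z - zb)"
    using Suc unfolding g_def gb_def by auto
  have inZ: "G (x, g) \<in> Z" "G (xb, gb) \<in> Z" using GZ gZ x by auto
  have "nZ (G (x, g) - G (xb, gb)) = nZ ((G (x, g) - G (xb, g)) + (G (xb, g) - G (xb, gb)))" by simp
  also have "\<dots> \<le> nZ (G (x, g) - G (xb, g)) + nZ (G (xb, g) - G (xb, gb))" by (rule normD(4)[OF normZ])
  also have "\<dots> \<le> LG * nX (x - xb) + l * nZ (g - gb)" using F2[OF gZ(1) x] F3[OF x(2) gZ] by linarith
  also have "\<dots> \<le> LG * nX (x - xb) + l * (LG * (\<Sum>i<m. l ^ i) * nX (x - xb) + l ^ m * nZ (z - zb))"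
    using IH l by (intro add_left_mono mult_left_mono) auto
  also have "\<dots> = LG * (1 + l * (\<Sum>i<m. l ^ i)) * nX (x - xb) + l ^ Suc m * nZ (z - zb)"
    by (simp add: algebra_simps)
  also have "1 + l * (\<Sum>i<m. l ^ i) = (\<Sum>i<Suc m. l ^ i)"
    by (subst sum.lessThan_Suc_shift) (simp add: sum_distrib_left)
  finally show ?case using inZ unfolding g_def gb_def by simp
qed

lemma sup3:
  "(a,b,c) \<in> S \<Longrightarrow> ereal (F a b c) \<le> (SUP p\<in>S. case p of (a,b,c) \<Rightarrow> ereal (F a b c))"
  by (rule SUP_upper2[where i="(a,b,c)"]) auto

lemma held_kT:
  assumes "T > 0"
  shows "held T zs (real k * T) = zs (Suc k)"
  using assms unfolding held_def by simp

theorem theorem1: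
  fixes nX :: "real^'nx \<Rightarrow> real" and nZ :: "real^'nz \<Rightarrow> real"
    and wp :: "real^'nx \<Rightarrow> real^'nx \<Rightarrow> real"
    and X :: "(real^'nx) set" and Z :: "(real^'nz) set"
    and f :: "(real^'nx) \<times> (real^'nz) \<Rightarrow> real^'nx"
    and G :: "(real^'nx) \<times> (real^'nz) \<Rightarrow> real^'nz"
  assumes normX: "is_norm nX" and normZ: "is_norm nZ"
    and wp: "compatible_weak_pairing wp nX"
    and convX: "convex X" and convZ: "convex Z"
    and contf: "continuous_on (X \<times> Z) f"
    and contG: "continuous_on (X \<times> Z) G" and GZ: "G ` (X \<times> Z) \<subseteq> Z"
    and X0: "0 \<in> X" and Z0: "0 \<in> Z"
    and f00: "f (0, 0) = 0" and G00: "G (0, 0) = 0"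
    and A1: "Lip_x_f nX X Z f < \<infinity>"
    and A2f: "0 < Lip_z_f nX nZ X Z f" "Lip_z_f nX nZ X Z f < \<infinity>"
    and A2G: "0 < Lip_x_G nX nZ X Z G" "Lip_x_G nX nZ X Z G < \<infinity>"
    and A3: "Lip_z_G nZ X Z G < 1"
    and cond: "- osLip_x_f wp nX X Z f * (1 - Lip_z_G nZ X Z G)
                 > Lip_z_f nX nZ X Z f * Lip_x_G nX nZ X Z G"
  shows "\<forall>n::nat. n > 0 \<longrightarrow> (\<forall>T::real. T > 0 \<longrightarrow>
     (\<exists>\<eta>1 \<eta>2. \<eta>1 > 0 \<and> \<eta>2 > 0 \<and>
       (\<exists>b. 0 < b \<and> b < 1 \<and>
          (\<forall>x zs xb zsb k. is_solution f G X Z T n x zs \<longrightarrow> is_solution f G X Z T n xb zsb \<longrightarrow>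
             cmp_norm nX nZ \<eta>1 \<eta>2 (x (real k * T) - xb (real k * T))
                (held T zs (real k * T) - held T zsb (real k * T))
             \<le> b ^ k * cmp_norm nX nZ \<eta>1 \<eta>2 (x 0 - xb 0) (held T zs 0 - held T zsb 0))) \<and>
       (\<exists>r a. r \<ge> 0 \<and> a > 0 \<and>
          (\<forall>x zs t. is_solution f G X Z T n x zs \<longrightarrow> t \<ge> 0 \<longrightarrow>
             cmp_norm nX nZ \<eta>1 \<eta>2 (x t) (held T zs t)
             \<le> r * exp (- a * t) * cmp_norm nX nZ \<eta>1 \<eta>2 (x 0) (held T zs 0)))))"
proof (intro allI impI)
  fix n :: nat and T :: real
  assume npos: "n > 0" and Tpos: "T > 0"
  note nD = normD[OF normX] and zD = normD[OF normZ]
  have nX0: "nX v > 0" if "v \<noteq> 0" for v using normX that unfolding is_norm_def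
    by (metis less_eq_real_def)
  have nZ0: "nZ v > 0" if "v \<noteq> 0" for v using normZ that unfolding is_norm_def
    by (metis less_eq_real_def)
  have ne1: "{(x, z1, z2). x \<in> X \<and> z1 \<in> Z \<and> z2 \<in> Z \<and> z1 \<noteq> z2} \<noteq> {}"
  proof
    assume E: "{(x, z1, z2). x \<in> X \<and> z1 \<in> Z \<and> z2 \<in> Z \<and> z1 \<noteq> z2} = {}"
    have "Lip_z_f nX nZ X Z f = -\<infinity>" unfolding Lip_z_f_def E by (simp add: bot_ereal_def)
    thus False using A2f by simp
  qed
  then obtain z1 z2 where z12: "z1 \<in> Z" "z2 \<in> Z" "z1 \<noteq> z2" by auto
  have ne2: "{(z, x1, x2). z \<in> Z \<and> x1 \<in> X \<and> x2 \<in> X \<and> x1 \<noteq> x2} \<noteq> {}"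
  proof
    assume E: "{(z, x1, x2). z \<in> Z \<and> x1 \<in> X \<and> x2 \<in> X \<and> x1 \<noteq> x2} = {}"
    have "Lip_x_G nX nZ X Z G = -\<infinity>" unfolding Lip_x_G_def E by (simp add: bot_ereal_def)
    thus False using A2G by simp
  qed
  then obtain x1 x2 where x12: "x1 \<in> X" "x2 \<in> X" "x1 \<noteq> x2" by auto
  obtain Lf where Lf: "Lip_z_f nX nZ X Z f = ereal Lf" using A2f by (cases "Lip_z_f nX nZ X Z f") auto
  obtain LG where LG: "Lip_x_G nX nZ X Z G = ereal LG" using A2G by (cases "Lip_x_G nX nZ X Z G") auto
  have Lfpos: "Lf > 0" using A2f Lf by simp
  have LGpos: "LG > 0" using A2G LG by simp
  have lge: "ereal (nZ (G (0, z1) - G (0, z2)) / nZ (z1 - z2)) \<le> Lip_z_G nZ X Z G"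
    unfolding Lip_z_G_def by (rule sup3) (use X0 z12 in auto)
  moreover have "0 \<le> nZ (G (0, z1) - G (0, z2)) / nZ (z1 - z2)" using nD zD by simp
  ultimately have lg0: "0 \<le> Lip_z_G nZ X Z G" by (metis ereal_less_eq(5) order_trans zero_ereal_def)
  obtain l where l: "Lip_z_G nZ X Z G = ereal l" using A3 lg0 by (cases "Lip_z_G nZ X Z G") auto
  have l01: "0 \<le> l" "l < 1" using lg0 A3 l by auto
  have osge: "ereal (wp (f (x1, 0) - f (x2, 0)) (x1 - x2) / (nX (x1 - x2))\<^sup>2) \<le> osLip_x_f wp nX X Z f"
    unfolding osLip_x_f_def by (rule sup3) (use Z0 x12 in auto)
  hence osnm: "osLip_x_f wp nX X Z f \<noteq> -\<infinity>" by auto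
  have osnp: "osLip_x_f wp nX X Z f \<noteq> \<infinity>"
  proof
    assume "osLip_x_f wp nX X Z f = \<infinity>"
    hence EQ: "- osLip_x_f wp nX X Z f * (1 - Lip_z_G nZ X Z G) = -\<infinity>" using l l01 by (simp add: one_ereal_def)
    from cond have "Lip_z_f nX nZ X Z f * Lip_x_G nX nZ X Z G < -\<infinity>" unfolding EQ .
    thus False by simp
  qed
  obtain c where c: "osLip_x_f wp nX X Z f = ereal c" using osnm osnp by (cases "osLip_x_f wp nX X Z f") auto
  have condr: "- c * (1 - l) > Lf * LG" using cond c l Lf LG by (simp add: one_ereal_def)
  have cneg: "c < 0"
  proof -
    have "Lf * LG > 0" using Lfpos LGpos by simp
    hence "- c * (1 - l) > 0" using condr by linarith
    thus ?thesis using l01 by (simp add: mult_less_0_iff)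
  qed
  have F1: "nX (f (x, za) - f (x, zb)) \<le> Lf * nZ (za - zb)" if "x \<in> X" "za \<in> Z" "zb \<in> Z" for x za zb
  proof (cases "za = zb")
    case True then show ?thesis using nD zD by simp
  next
    case False
    have "ereal (nX (f (x, za) - f (x, zb)) / nZ (za - zb)) \<le> Lip_z_f nX nZ X Z f"
      unfolding Lip_z_f_def by (rule sup3) (use that False in auto)
    hence "nX (f (x, za) - f (x, zb)) / nZ (za - zb) \<le> Lf" using Lf by simp
    thus ?thesis using nZ0[of "za - zb"] False by (simp add: divide_le_eq mult.commute)
  qed
  have F2: "nZ (G (xa, z) - G (xb, z)) \<le> LG * nX (xa - xb)" if "z \<in> Z" "xa \<in> X" "xb \<in> X" for z xa xb
  proof (cases "xa = xb")
    case True then show ?thesis using nD zD by simp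
  next
    case False
    have "ereal (nZ (G (xa, z) - G (xb, z)) / nX (xa - xb)) \<le> Lip_x_G nX nZ X Z G"
      unfolding Lip_x_G_def by (rule sup3) (use that False in auto)
    hence "nZ (G (xa, z) - G (xb, z)) / nX (xa - xb) \<le> LG" using LG by simp
    thus ?thesis using nX0[of "xa - xb"] False by (simp add: divide_le_eq mult.commute)
  qed
  have F3: "nZ (G (x, za) - G (x, zb)) \<le> l * nZ (za - zb)" if "x \<in> X" "za \<in> Z" "zb \<in> Z" for x za zb
  proof (cases "za = zb")
    case True then show ?thesis using nD zD by simp
  next
    case False
    have "ereal (nZ (G (x, za) - G (x, zb)) / nZ (za - zb)) \<le> Lip_z_G nZ X Z G"
      unfolding Lip_z_G_def by (rule sup3) (use that False in auto)
    hence "nZ (G (x, za) - G (x, zb)) / nZ (za - zb) \<le> l" using l by simp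
    thus ?thesis using nZ0[of "za - zb"] False by (simp add: divide_le_eq mult.commute)
  qed
  have F4: "wp (f (xa, z) - f (xb, z)) (xa - xb) \<le> c * (nX (xa - xb))\<^sup>2" if "z \<in> Z" "xa \<in> X" "xb \<in> X" for z xa xb
  proof (cases "xa = xb")
    case True then show ?thesis using wp_add(2)[OF wp, of 0] nD by simp
  next
    case False
    have "ereal (wp (f (xa, z) - f (xb, z)) (xa - xb) / (nX (xa - xb))\<^sup>2) \<le> osLip_x_f wp nX X Z f"
      unfolding osLip_x_f_def by (rule sup3) (use that False in auto)
    hence "wp (f (xa, z) - f (xb, z)) (xa - xb) / (nX (xa - xb))\<^sup>2 \<le> c" using c by simp
    moreover have "(nX (xa - xb))\<^sup>2 > 0" using nX0[of "xa - xb"] False by simp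
    ultimately show ?thesis by (simp add: divide_le_eq mult.commute)
  qed
  have solD: "t \<ge> 0 \<Longrightarrow> x t \<in> X" "zs k \<in> Z"
      "zs (Suc k) = Giter G n (x (real k * T)) (zs k)"
      "t \<in> {real k * T .. real (Suc k) * T} \<Longrightarrow>
         (x has_vector_derivative f (x t, zs (Suc k))) (at t within {real k * T .. real (Suc k) * T})"
    if "is_solution f G X Z T n x zs" for x zs t k
    using that unfolding is_solution_def by auto
  have stepx: "nX (x t - xb t) \<le> exp (c * (t - real k * T)) * nX (x (real k * T) - xb (real k * T))
      + (Lf * nZ (zs (Suc k) - zsb (Suc k))) / (-c) * (1 - exp (c * (t - real k * T)))"
    if sol: "is_solution f G X Z T n x zs" "is_solution f G X Z T n xb zsb"
      and t: "t \<in> {real k * T .. real (Suc k) * T}" for x zs xb zsb k t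
  proof -
    let ?z = "zs (Suc k)" and ?zb = "zsb (Suc k)"
    have zZ: "?z \<in> Z" "?zb \<in> Z" using solD(2)[OF sol(1)] solD(2)[OF sol(2)] by auto
    have kT0: "real k * T \<ge> 0" using Tpos by simp
    have der: "((\<lambda>s. x s - xb s) has_vector_derivative (f (x s, ?z) - f (xb s, ?zb)))
        (at s within {real k * T .. real (Suc k) * T})" if "s \<in> {real k * T .. real (Suc k) * T}" for s
      by (rule has_vector_derivative_diff[OF solD(4)[OF sol(1) that] solD(4)[OF sol(2) that]])
    have osl: "wp (f (x s, ?z) - f (xb s, ?zb)) (x s - xb s)
        \<le> c * (nX (x s - xb s))\<^sup>2 + (Lf * nZ (?z - ?zb)) * nX (x s - xb s)"
      if "s \<in> {real k * T .. real (Suc k) * T}" for s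
    proof -
      have s0: "s \<ge> 0" using that kT0 by auto
      have xs: "x s \<in> X" "xb s \<in> X" using solD(1)[OF sol(1) s0] solD(1)[OF sol(2) s0] by auto
      have split: "f (x s, ?z) - f (xb s, ?zb) = (f (x s, ?z) - f (xb s, ?z)) + (f (xb s, ?z) - f (xb s, ?zb))"
        by simp
      have "wp (f (x s, ?z) - f (xb s, ?zb)) (x s - xb s)
          \<le> wp (f (x s, ?z) - f (xb s, ?z)) (x s - xb s) + wp (f (xb s, ?z) - f (xb s, ?zb)) (x s - xb s)"
        unfolding split by (rule wp_add(1)[OF wp])
      also have "\<dots> \<le> c * (nX (x s - xb s))\<^sup>2 + nX (f (xb s, ?z) - f (xb s, ?zb)) * nX (x s - xb s)"
        using F4[OF zZ(1) xs] wp_le[OF wp normX, of "f (xb s, ?z) - f (xb s, ?zb)" "x s - xb s"] by linarith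
      also have "\<dots> \<le> c * (nX (x s - xb s))\<^sup>2 + (Lf * nZ (?z - ?zb)) * nX (x s - xb s)"
        using F1[OF xs(2) zZ] nD(1) by (intro add_left_mono mult_right_mono) auto
      finally show ?thesis .
    qed
    have Dnn: "Lf * nZ (?z - ?zb) \<ge> 0" using Lfpos zD by simp
    show ?thesis using ode_bound[OF normX wp cneg Dnn der osl t] by simp
  qed
  define kap where "kap = Lf / (-c)"
  have kap: "kap > 0" unfolding kap_def using Lfpos cneg by (simp add: divide_pos_neg)
  define e where "e = exp (c * T)"
  have e: "0 < e" "e < 1" unfolding e_def using cneg Tpos by (auto simp: mult_neg_pos)
  define S where "S = (\<Sum>i<n. l ^ i)"
  have lnlt: "l ^ n < 1" using power_strict_mono[of l 1 n] l01 npos by simp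
  have Seq: "S * (1 - l) = 1 - l ^ n" unfolding S_def using l01 by (simp add: sum_gp_strict)
  have Spos: "S > 0"
  proof -
    have "S * (1 - l) > 0" using Seq lnlt by simp
    thus ?thesis using l01 by (simp add: zero_less_mult_iff)
  qed
  define al where "al = LG * S"
  define be where "be = l ^ n"
  have al: "al > 0" unfolding al_def using LGpos Spos by simp
  have be: "be \<ge> 0" unfolding be_def using l01 by simp
  have condd: "al * kap < 1 - be"
  proof -
    have "LG * Lf < (-c) * (1 - l)" using condr by (simp add: mult.commute)
    moreover have "LG * Lf / (-c) < 1 - l \<longleftrightarrow> LG * Lf < (1 - l) * (-c)"
      by (rule pos_divide_less_eq) (use cneg in simp)
    ultimately have "LG * Lf / (-c) < 1 - l" by (simp add: mult.commute)
    hence "S * (LG * Lf / (-c)) < S * (1 - l)" using Spos by (rule mult_strict_left_mono)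
    thus ?thesis unfolding al_def kap_def be_def Seq[symmetric] by (simp add: algebra_simps)
  qed
  obtain eta2 lam where eta2: "eta2 > 0" and lam: "0 < lam" "lam < 1"
    and contr: "\<And>A B A' B'. 0 \<le> A \<Longrightarrow> 0 \<le> B \<Longrightarrow> 0 \<le> A' \<Longrightarrow> 0 \<le> B' \<Longrightarrow>
        A' \<le> e * A + (kap * (1 - e)) * B \<Longrightarrow> B' \<le> (al * e) * A + (al * kap * (1 - e) + be) * B \<Longrightarrow>
        A'\<^sup>2 + eta2 * B'\<^sup>2 \<le> lam\<^sup>2 * (A\<^sup>2 + eta2 * B\<^sup>2)"
    using contr_exists[OF e kap al be condd] by blast
  have onestep: "(nX (x (real (Suc k) * T) - xb (real (Suc k) * T)))\<^sup>2 + eta2 * (nZ (zs (Suc (Suc k)) - zsb (Suc (Suc k))))\<^sup>2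
      \<le> lam\<^sup>2 * ((nX (x (real k * T) - xb (real k * T)))\<^sup>2 + eta2 * (nZ (zs (Suc k) - zsb (Suc k)))\<^sup>2)"
    if sol: "is_solution f G X Z T n x zs" "is_solution f G X Z T n xb zsb" for x zs xb zsb k
  proof -
    define A where "A = nX (x (real k * T) - xb (real k * T))"
    define B where "B = nZ (zs (Suc k) - zsb (Suc k))"
    define A' where "A' = nX (x (real (Suc k) * T) - xb (real (Suc k) * T))"
    define B' where "B' = nZ (zs (Suc (Suc k)) - zsb (Suc (Suc k)))"
    have tt: "real (Suc k) * T \<in> {real k * T .. real (Suc k) * T}" using Tpos by simp
    have dT: "real (Suc k) * T - real k * T = T" by (simp add: algebra_simps)
    have "A' \<le> e * A + (Lf * B) / (-c) * (1 - e)"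
      using stepx[OF sol tt] unfolding A_def B_def A'_def e_def dT .
    hence A'le: "A' \<le> e * A + (kap * (1 - e)) * B" unfolding kap_def by (simp add: algebra_simps)
    have s0: "real (Suc k) * T \<ge> 0" using Tpos by simp
    have gb: "nZ (Giter G n (x (real (Suc k) * T)) (zs (Suc k)) - Giter G n (xb (real (Suc k) * T)) (zsb (Suc k)))
        \<le> LG * S * A' + l ^ n * B"
      using giter_bound[OF GZ F2 F3 normZ l01(1) less_imp_le[OF LGpos]
          solD(1)[OF sol(1) s0] solD(1)[OF sol(2) s0] solD(2)[OF sol(1)] solD(2)[OF sol(2)], of n]
      unfolding S_def A'_def B_def by blast
    hence B'le0: "B' \<le> al * A' + be * B"
      unfolding B'_def al_def be_def using solD(3)[OF sol(1), of "Suc k"] solD(3)[OF sol(2), of "Suc k"] by simp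
    have "al * A' \<le> al * (e * A + (kap * (1 - e)) * B)" using A'le al by (intro mult_left_mono) auto
    hence B'le: "B' \<le> (al * e) * A + (al * kap * (1 - e) + be) * B" using B'le0 by (simp add: algebra_simps)
    have nn: "0 \<le> A" "0 \<le> B" "0 \<le> A'" "0 \<le> B'" unfolding A_def B_def A'_def B'_def using nD zD by auto
    show ?thesis using contr[OF nn A'le B'le] unfolding A_def B_def A'_def B'_def .
  qed
  have dcontr: "sqrt ((nX (x (real k * T) - xb (real k * T)))\<^sup>2 + eta2 * (nZ (zs (Suc k) - zsb (Suc k)))\<^sup>2)
      \<le> lam ^ k * sqrt ((nX (x 0 - xb 0))\<^sup>2 + eta2 * (nZ (zs (Suc 0) - zsb (Suc 0)))\<^sup>2)"
    if sol: "is_solution f G X Z T n x zs" "is_solution f G X Z T n xb zsb" for x zs xb zsb k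
  proof (induction k)
    case 0 then show ?case by simp
  next
    case (Suc k)
    have "sqrt ((nX (x (real (Suc k) * T) - xb (real (Suc k) * T)))\<^sup>2 + eta2 * (nZ (zs (Suc (Suc k)) - zsb (Suc (Suc k))))\<^sup>2)
        \<le> sqrt (lam\<^sup>2 * ((nX (x (real k * T) - xb (real k * T)))\<^sup>2 + eta2 * (nZ (zs (Suc k) - zsb (Suc k)))\<^sup>2))"
      using onestep[OF sol, of k] by (rule real_sqrt_le_mono)
    also have "\<dots> = lam * sqrt ((nX (x (real k * T) - xb (real k * T)))\<^sup>2 + eta2 * (nZ (zs (Suc k) - zsb (Suc k)))\<^sup>2)"
      using lam by (simp add: real_sqrt_mult)
    also have "\<dots> \<le> lam * (lam ^ k * sqrt ((nX (x 0 - xb 0))\<^sup>2 + eta2 * (nZ (zs (Suc 0) - zsb (Suc 0)))\<^sup>2))"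
      using Suc lam by (intro mult_left_mono) auto
    finally show ?case by (simp add: mult.assoc)
  qed
  have giter0: "Giter G m 0 0 = 0" for m by (induction m) (auto simp: G00)
  have sol0: "is_solution f G X Z T n (\<lambda>_. 0) (\<lambda>_. 0)"
    unfolding is_solution_def using X0 Z0 by (auto simp: giter0 f00 intro: has_vector_derivative_const)
  have held0: "held T zs 0 = zs (Suc 0)" for zs :: "nat \<Rightarrow> real^'nz" unfolding held_def by simp
  have partI: "\<forall>x zs xb zsb k. is_solution f G X Z T n x zs \<longrightarrow> is_solution f G X Z T n xb zsb \<longrightarrow>
             cmp_norm nX nZ 1 eta2 (x (real k * T) - xb (real k * T))
                (held T zs (real k * T) - held T zsb (real k * T))
             \<le> lam ^ k * cmp_norm nX nZ 1 eta2 (x 0 - xb 0) (held T zs 0 - held T zsb 0)"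
    using dcontr unfolding cmp_norm_def held_kT[OF Tpos] held0 by simp
  define R where "R = sqrt (2 + 2 * kap\<^sup>2 / eta2)"
  define r where "r = R / lam"
  define a where "a = - ln lam / T"
  have r0: "r \<ge> 0" unfolding r_def R_def using lam eta2 by simp
  have a0: "a > 0" unfolding a_def using lam Tpos by (simp add: divide_neg_pos)
  have partII: "\<forall>x zs t. is_solution f G X Z T n x zs \<longrightarrow> t \<ge> 0 \<longrightarrow>
             cmp_norm nX nZ 1 eta2 (x t) (held T zs t)
             \<le> r * exp (- a * t) * cmp_norm nX nZ 1 eta2 (x 0) (held T zs 0)"
  proof (intro allI impI)
    fix x zs and t :: real
    assume sol: "is_solution f G X Z T n x zs" and t0: "t \<ge> 0"
    define k where "k = nat \<lfloor>t / T\<rfloor>"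
    have fl0: "\<lfloor>t / T\<rfloor> \<ge> 0" using t0 Tpos by simp
    have rk: "real k = real_of_int \<lfloor>t / T\<rfloor>" unfolding k_def using fl0 by simp
    have k1: "real k \<le> t / T" "t / T < real k + 1" unfolding rk by linarith+
    have kt: "real k * T \<le> t" "t \<le> real (Suc k) * T"
      using k1 Tpos by (simp_all add: field_simps)
    have heldt: "held T zs t = zs (Suc k)" unfolding held_def k_def ..
    define A where "A = nX (x (real k * T))"
    define B where "B = nZ (zs (Suc k))"
    define E where "E = exp (c * (t - real k * T))"
    have E: "0 < E" "E \<le> 1" unfolding E_def using cneg kt by (auto simp: mult_nonpos_nonneg)
    have AB: "A \<ge> 0" "B \<ge> 0" unfolding A_def B_def using nD zD by auto
    have "nX (x t) \<le> E * A + (Lf * B) / (-c) * (1 - E)"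
      using stepx[OF sol sol0, of t k] kt unfolding A_def B_def E_def by simp
    also have "\<dots> = E * A + (kap * B) * (1 - E)" unfolding kap_def by simp
    also have "\<dots> \<le> A + kap * B"
    proof -
      have "E * A \<le> A" using E AB by (simp add: mult_left_le_one_le)
      moreover have "(kap * B) * (1 - E) \<le> kap * B" using E AB kap by (simp add: mult_left_le)
      ultimately show ?thesis by linarith
    qed
    finally have xt: "nX (x t) \<le> A + kap * B" .
    have "cmp_norm nX nZ 1 eta2 (x t) (held T zs t) = sqrt ((nX (x t))\<^sup>2 + eta2 * B\<^sup>2)"
      unfolding cmp_norm_def heldt B_def by simp
    also have "\<dots> \<le> sqrt ((A + kap * B)\<^sup>2 + eta2 * B\<^sup>2)"
      using xt nD(1) by (intro real_sqrt_le_mono add_right_mono power_mono) auto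
    also have "\<dots> \<le> sqrt (R\<^sup>2 * (A\<^sup>2 + eta2 * B\<^sup>2))"
    proof (rule real_sqrt_le_mono)
      have R2: "R\<^sup>2 = 2 + 2 * kap\<^sup>2 / eta2" unfolding R_def using eta2 by (simp add: add_nonneg_nonneg)
      have exp1: "R\<^sup>2 * (A\<^sup>2 + eta2 * B\<^sup>2) = 2 * A\<^sup>2 + 2 * eta2 * B\<^sup>2 + 2 * kap\<^sup>2 * A\<^sup>2 / eta2 + 2 * kap\<^sup>2 * B\<^sup>2"
        unfolding R2 using eta2 by (simp add: field_simps)
      have exp2: "(A + kap * B)\<^sup>2 = A\<^sup>2 + 2 * (kap * A * B) + kap\<^sup>2 * B\<^sup>2" by (simp add: power2_eq_square algebra_simps)
      have "0 \<le> (A - kap * B)\<^sup>2" by simp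
      hence cs: "2 * (kap * A * B) \<le> A\<^sup>2 + kap\<^sup>2 * B\<^sup>2" by (simp add: power2_eq_square algebra_simps)
      have "0 \<le> 2 * kap\<^sup>2 * A\<^sup>2 / eta2" using eta2 by simp
      moreover have "0 \<le> eta2 * B\<^sup>2" using eta2 by simp
      ultimately show "(A + kap * B)\<^sup>2 + eta2 * B\<^sup>2 \<le> R\<^sup>2 * (A\<^sup>2 + eta2 * B\<^sup>2)"
        unfolding exp1 exp2 using cs by linarith
    qed
    also have "\<dots> = R * sqrt (A\<^sup>2 + eta2 * B\<^sup>2)"
    proof -
      have "2 + 2 * kap\<^sup>2 / eta2 \<ge> 0" using eta2 by simp
      hence "\<bar>R\<bar> = R" unfolding R_def by simp
      thus ?thesis by (simp add: real_sqrt_mult)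
    qed
    also have "\<dots> \<le> R * (lam ^ k * cmp_norm nX nZ 1 eta2 (x 0) (held T zs 0))"
    proof -
      have "sqrt (A\<^sup>2 + eta2 * B\<^sup>2) \<le> lam ^ k * cmp_norm nX nZ 1 eta2 (x 0) (held T zs 0)"
        using dcontr[OF sol sol0, of k] unfolding A_def B_def cmp_norm_def held0 by simp
      moreover have "2 + 2 * kap\<^sup>2 / eta2 \<ge> 0" using eta2 by simp
      ultimately show ?thesis unfolding R_def by (intro mult_left_mono) auto
    qed
    also have "\<dots> \<le> R * (exp (- a * t) / lam * cmp_norm nX nZ 1 eta2 (x 0) (held T zs 0))"
    proof -
      have llam: "ln lam < 0" using lam by simp
      have "exp (real (Suc k) * ln lam) = exp (ln lam) ^ Suc k" by (rule exp_of_nat_mult)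
      hence "lam * lam ^ k = exp (real (Suc k) * ln lam)" using lam by simp
      also have "\<dots> \<le> exp ((t / T) * ln lam)"
        unfolding exp_le_cancel_iff using k1 llam by (intro mult_right_mono_neg) auto
      also have "(t / T) * ln lam = - a * t" unfolding a_def using Tpos by (simp add: field_simps)
      finally have "lam ^ k \<le> exp (- a * t) / lam" using lam by (simp add: field_simps)
      moreover have "cmp_norm nX nZ 1 eta2 (x 0) (held T zs 0) \<ge> 0" unfolding cmp_norm_def using eta2 by simp
      moreover have "2 + 2 * kap\<^sup>2 / eta2 \<ge> 0" using eta2 by simp
      ultimately show ?thesis unfolding R_def by (intro mult_left_mono mult_right_mono) auto
    qed
    also have "\<dots> = r * exp (- a * t) * cmp_norm nX nZ 1 eta2 (x 0) (held T zs 0)"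
      unfolding r_def by simp
    finally show "cmp_norm nX nZ 1 eta2 (x t) (held T zs t)
             \<le> r * exp (- a * t) * cmp_norm nX nZ 1 eta2 (x 0) (held T zs 0)" .
  qed
  show "\<exists>\<eta>1 \<eta>2. \<eta>1 > 0 \<and> \<eta>2 > 0 \<and>
       (\<exists>b. 0 < b \<and> b < 1 \<and>
          (\<forall>x zs xb zsb k. is_solution f G X Z T n x zs \<longrightarrow> is_solution f G X Z T n xb zsb \<longrightarrow>
             cmp_norm nX nZ \<eta>1 \<eta>2 (x (real k * T) - xb (real k * T))
                (held T zs (real k * T) - held T zsb (real k * T))
             \<le> b ^ k * cmp_norm nX nZ \<eta>1 \<eta>2 (x 0 - xb 0) (held T zs 0 - held T zsb 0))) \<and>
       (\<exists>r a. r \<ge> 0 \<and> a > 0 \<and>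
          (\<forall>x zs t. is_solution f G X Z T n x zs \<longrightarrow> t \<ge> 0 \<longrightarrow>
             cmp_norm nX nZ \<eta>1 \<eta>2 (x t) (held T zs t)
             \<le> r * exp (- a * t) * cmp_norm nX nZ \<eta>1 \<eta>2 (x 0) (held T zs 0)))"
    apply (rule exI[of _ 1], rule exI[of _ eta2])
    apply (intro conjI)
       apply simp
      apply (rule eta2)
     apply (rule exI[of _ lam]) using lam partI apply simp
    apply (rule exI[of _ r], rule exI[of _ a]) using r0 a0 partII apply simp
    done
qed

end
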